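(* Let $m\ge2$ and let $G:\mathbb{R}^{m(m-1)/2}\to\mathbb{S}^m$ be defined by $G(x)=I+\sum_{1\le i<j\le m}A^{ij}x_{ij}$, where the components of $x$ are indexed by pairs $(i,j)$ with $1\le i<j\le m$. Then every $x$ with $G(x)\in\mathbb{S}^m_+$ is nondegenerate, i.e. $$\mathbb{S}^m=\operatorname{lin}\mathcal{T}_{\mathbb{S}^m_+}(G(x))+\operatorname{Im}\nabla G(x).$$
   Context: $\mathbb{S}^m$ is the space of real symmetric $m\times m$ matrices and $\mathbb{S}^m_+$ the cone of positive semidefinite ones. $A^{ij}$ denotes the $m\times m$ matrix with $1$ in the $(i,j)$ and $(j,i)$ entries and $0$ elsewhere. $\mathcal{T}_{\mathbb{S}^m_+}(Y)$ is the tangent cone of $\mathbb{S}^m_+$ at $Y$, $\operatorname{lin}K=K\cap(-K)$ is the lineality space of a cone $K$, and $\operatorname{Im}\nabla G(x)$ is the image of the derivative $\nabla G(x):\mathbb{R}^{m(m-1)/2}\to\mathbb{S}^m$, $v\mapsto\sum_{i<j}v_{ij}A^{ij}$. (This is the constraint of the closest correlation matrix problem: minimize $\sum_{i<j}(H_{ij}-x_{ij})^2$ subject to $G(x)\in\mathbb{S}^m_+$, for a given symmetric $H$.) *)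

theory Defs
  imports "HOL-Analysis.Analysis"
begin

text \<open>Matrices indexed by a finite linearly ordered type 'n, with m = CARD('n).\<close>

definition sym_mats :: "(real^'n::finite^'n) set" where
  "sym_mats = {A. transpose A = A}"

definition psd_cone :: "(real^'n::finite^'n) set" where
  "psd_cone = {A. transpose A = A \<and> (\<forall>v::real^'n. 0 \<le> v \<bullet> (A *v v))}"

definition tangent_cone :: "'a::real_normed_vector set \<Rightarrow> 'a \<Rightarrow> 'a set" where
  "tangent_cone K y = {d. \<exists>t u. (\<forall>k. 0 < t k) \<and> t \<longlonglongrightarrow> 0 \<and> u \<longlonglongrightarrow> d
                           \<and> (\<forall>k. y + t k *\<^sub>R u k \<in> K)}"

definition lineality :: "'a::ab_group_add set \<Rightarrow> 'a set" where
  "lineality K = K \<inter> uminus ` K"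

definition Aij :: "'n \<Rightarrow> 'n \<Rightarrow> real^'n^'n" where
  "Aij i j = (\<chi> k l. if (k = i \<and> l = j) \<or> (k = j \<and> l = i) then 1 else 0)"

definition upper_pairs :: "('n::linorder \<times> 'n) set" where
  "upper_pairs = {(i, j). i < j}"

text \<open>x has components x (i,j) for i < j (other values are ignored).\<close>
definition corrG :: "('n \<times> 'n \<Rightarrow> real) \<Rightarrow> ((real, 'n::{finite,linorder}) vec, 'n) vec" where
  "corrG x = mat 1 + (\<Sum>p\<in>upper_pairs. x p *\<^sub>R Aij (fst p) (snd p))"

text \<open>Derivative of corrG at any point: v \<mapsto> sum of v_ij A^ij.\<close>
definition DcorrG :: "('n \<times> 'n \<Rightarrow> real) \<Rightarrow> ('n \<times> 'n \<Rightarrow> real) \<Rightarrow> ((real, 'n::{finite,linorder}) vec, 'n) vec" where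
  "DcorrG x v = (\<Sum>p\<in>upper_pairs. v p *\<^sub>R Aij (fst p) (snd p))"

end

theory Submission
  imports Defs
begin

lemma mm_rdistrib: "((A::real^'n^'m) + B) ** C = A ** C + B ** C"
  by (vector matrix_matrix_mult_def sum.distrib[symmetric] field_simps)

lemma transpose_add': "transpose ((A::real^'n^'n) + B) = transpose A + transpose B"
  by (simp add: transpose_def vec_eq_iff)

lemma quad_expand:
  fixes Y B :: "real^'n^'n"
  shows "transpose (mat 1 + t *\<^sub>R B) ** Y ** (mat 1 + t *\<^sub>R B)
     = Y + t *\<^sub>R (Y ** B + transpose B ** Y + t *\<^sub>R (transpose B ** Y ** B))"
  by (simp add: transpose_add' transpose_scalar matrix_add_ldistrib mm_rdistrib
      matrix_scalar_ac scalar_matrix_assoc[symmetric] matrix_mul_assoc algebra_simps)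

lemma psd_congr:
  fixes Y M :: "real^'n^'n"
  assumes "Y \<in> psd_cone"
  shows "transpose M ** Y ** M \<in> psd_cone"
proof -
  have sy: "transpose Y = Y" using assms by (simp add: psd_cone_def)
  have "transpose (transpose M ** Y ** M) = transpose M ** Y ** M"
    by (simp add: matrix_transpose_mul sy matrix_mul_assoc)
  moreover have "0 \<le> v \<bullet> ((transpose M ** Y ** M) *v v)" for v
  proof -
    have "v \<bullet> ((transpose M ** Y ** M) *v v) = (M *v v) \<bullet> (Y *v (M *v v))"
      by (metis dot_lmul_matrix matrix_vector_mul_assoc vector_transpose_matrix)
    then show ?thesis using assms by (simp add: psd_cone_def)
  qed
  ultimately show ?thesis by (simp add: psd_cone_def)
qed

lemma tangent_lemma:
  fixes Y B :: "real^'n^'n"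
  assumes "Y \<in> psd_cone"
  shows "Y ** B + transpose B ** Y \<in> tangent_cone psd_cone Y"
proof -
  define t where "t = (\<lambda>k::nat. 1 / (real k + 1))"
  define u where "u = (\<lambda>k. Y ** B + transpose B ** Y + t k *\<^sub>R (transpose B ** Y ** B))"
  have tpos: "\<forall>k. 0 < t k" by (simp add: t_def)
  have t0: "t \<longlonglongrightarrow> 0" unfolding t_def using LIMSEQ_Suc[OF lim_inverse_n'] by (simp add: add.commute)
  have "u \<longlonglongrightarrow> Y ** B + transpose B ** Y + 0 *\<^sub>R (transpose B ** Y ** B)"
    unfolding u_def by (intro tendsto_intros t0)
  then have u0: "u \<longlonglongrightarrow> Y ** B + transpose B ** Y" by simp
  have "\<forall>k. Y + t k *\<^sub>R u k \<in> psd_cone"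
    using psd_congr[OF assms] by (simp add: u_def quad_expand[symmetric])
  then show ?thesis unfolding tangent_cone_def using tpos t0 u0 by blast
qed

lemma transpose_nth: "transpose A $ i $ j = A $ j $ i"
  by (simp add: transpose_def)

lemma Aij_nth: "Aij i j $ k $ l = (if (k = i \<and> l = j) \<or> (k = j \<and> l = i) then 1 else 0)"
  by (simp add: Aij_def)

lemma finite_upper: "finite (upper_pairs :: ('n::{finite,linorder} \<times> 'n) set)"
  by (rule finite_subset[of _ UNIV]) auto

lemma corrG_diag: fixes x :: "'n::{finite,linorder} \<times> 'n \<Rightarrow> real" shows "corrG x $ i $ i = 1"
proof -
  have "(\<Sum>p\<in>upper_pairs. x p * Aij (fst p) (snd p) $ i $ i) = 0"
    by (rule sum.neutral) (auto simp: Aij_nth upper_pairs_def)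
  then show ?thesis by (simp add: corrG_def mat_def)
qed

lemma DcorrG_sym: fixes x :: "'n::{finite,linorder} \<times> 'n \<Rightarrow> real" shows "transpose (DcorrG x v) = DcorrG x v"
proof -
  have "\<And>i j k l. Aij i j $ k $ l = Aij i j $ l $ k" by (auto simp: Aij_nth)
  then show ?thesis unfolding DcorrG_def transpose_def vec_eq_iff
    apply (simp only: vec_lambda_beta sum_component vector_scaleR_component)
    apply (intro allI sum.cong refl)
    apply (simp add: Aij_nth conj_commute)
    done
qed

lemma DcorrG_rep:
  fixes x :: "'n::{finite,linorder} \<times> 'n \<Rightarrow> real" and b :: "((real, 'n) vec, 'n) vec"
  assumes sb: "transpose b = b" and db: "\<And>i. b $ i $ i = 0"
  shows "DcorrG x (\<lambda>p. b $ fst p $ snd p) = b"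
proof -
  have "(\<Sum>p\<in>upper_pairs. b $ fst p $ snd p * Aij (fst p) (snd p) $ k $ l) = b $ k $ l" for k l
  proof -
    have bs: "b $ l $ k = b $ k $ l" using arg_cong[OF sb, of "\<lambda>M. M $ k $ l"] by (simp only: transpose_nth)
    have "(\<Sum>p\<in>upper_pairs. b $ fst p $ snd p * Aij (fst p) (snd p) $ k $ l)
        = (\<Sum>p\<in>upper_pairs. if p = (min k l, max k l) \<and> k \<noteq> l then b $ k $ l else 0)"
    proof (rule sum.cong[OF refl])
      fix p :: "'n \<times> 'n" assume "p \<in> upper_pairs"
      then obtain i j where p: "p = (i, j)" "i < j" by (auto simp: upper_pairs_def)
      show "b $ fst p $ snd p * Aij (fst p) (snd p) $ k $ l
          = (if p = (min k l, max k l) \<and> k \<noteq> l then b $ k $ l else 0)"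
      proof (cases k l rule: linorder_cases)
        case less
        then have "min k l = k" "max k l = l" by auto
        then show ?thesis using p less by (simp add: Aij_nth) (metis less_asym)
      next
        case equal then show ?thesis using p by (simp add: Aij_nth) (metis less_irrefl)
      next
        case greater
        then have "min k l = l" "max k l = k" by auto
        then show ?thesis using p greater bs by (simp add: Aij_nth) (metis less_asym)
      qed
    qed
    also have "\<dots> = b $ k $ l"
    proof (cases "k = l")
      case True then show ?thesis by (simp add: db)
    next
      case False
      then have "(min k l, max k l) \<in> upper_pairs"
        by (auto simp: upper_pairs_def min_def max_def)
      then show ?thesis using False finite_upper by (simp add: sum.delta')
    qed
    finally show ?thesis .
  qed
  then show ?thesis by (simp add: DcorrG_def vec_eq_iff)
qed

lemma tangent_sym:
  fixes Y :: "real^'n^'n"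
  assumes sy: "transpose Y = Y" and d: "d \<in> tangent_cone psd_cone Y"
  shows "transpose d = d"
proof -
  obtain t u where tp: "\<forall>k. 0 < t k" and u: "u \<longlonglongrightarrow> d" and inK: "\<forall>k. Y + t k *\<^sub>R u k \<in> psd_cone"
    using d unfolding tangent_cone_def by blast
  have us: "u k $ i $ j = u k $ j $ i" for k i j
  proof -
    have E: "transpose (Y + t k *\<^sub>R u k) = Y + t k *\<^sub>R u k" using inK by (simp add: psd_cone_def)
    have "(Y + t k *\<^sub>R u k) $ j $ i = (Y + t k *\<^sub>R u k) $ i $ j"
      using arg_cong[OF E, of "\<lambda>M. M $ i $ j"] by (simp only: transpose_nth)
    then have e1: "Y $ j $ i + t k * u k $ j $ i = Y $ i $ j + t k * u k $ i $ j" by simp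
    have "Y $ j $ i = Y $ i $ j" using arg_cong[OF sy, of "\<lambda>M. M $ i $ j"] by (simp only: transpose_nth)
    with e1 have "t k * u k $ j $ i = t k * u k $ i $ j" by simp
    then show ?thesis using tp[rule_format, of k] by simp
  qed
  have "d $ i $ j = d $ j $ i" for i j
  proof -
    have l1: "(\<lambda>k. u k $ i $ j) \<longlonglongrightarrow> d $ i $ j" by (intro tendsto_vec_nth u)
    have fe: "(\<lambda>k. u k $ i $ j) = (\<lambda>k. u k $ j $ i)" by (rule ext, rule us)
    have "(\<lambda>k. u k $ j $ i) \<longlonglongrightarrow> d $ j $ i" by (intro tendsto_vec_nth u)
    then have l2: "(\<lambda>k. u k $ i $ j) \<longlonglongrightarrow> d $ j $ i" by (simp only: fe)
    show ?thesis using LIMSEQ_unique[OF l1 l2] .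
  qed
  then show ?thesis by (simp add: vec_eq_iff transpose_nth)
qed

theorem proposition5p2:
  fixes x :: "'n::{finite,linorder} \<times> 'n \<Rightarrow> real"
  assumes "CARD('n) \<ge> 2"
    and "corrG x \<in> psd_cone"
  shows "sym_mats =
         {a + b | a b. a \<in> lineality (tangent_cone psd_cone (corrG x)) \<and> b \<in> range (DcorrG x)}"
proof -
  define Y where "Y = corrG x"
  have psd: "Y \<in> psd_cone" using assms(2) by (simp add: Y_def)
  have sy: "transpose Y = Y" using psd by (simp add: psd_cone_def)
  show ?thesis
  proof (rule set_eqI, rule iffI)
    fix S :: "((real, 'n) vec, 'n) vec" assume "S \<in> sym_mats"
    then have sS: "transpose S = S" by (simp add: sym_mats_def)
    define B :: "((real, 'n) vec, 'n) vec" where "B = (\<chi> i j. if i = j then S $ i $ i / 2 else 0)"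
    define H where "H = Y ** B + transpose B ** Y"
    have H1: "H \<in> tangent_cone psd_cone Y" unfolding H_def by (rule tangent_lemma[OF psd])
    have "Y ** (-B) + transpose (-B) ** Y \<in> tangent_cone psd_cone Y" by (rule tangent_lemma[OF psd])
    moreover have "Y ** (-B) + transpose (-B) ** Y = - H"
      by (simp add: H_def vec_eq_iff matrix_matrix_mult_def transpose_def sum_negf)
    ultimately have H2: "- H \<in> tangent_cone psd_cone Y" by simp
    have Hl: "H \<in> lineality (tangent_cone psd_cone Y)"
      unfolding lineality_def using H1 H2 by (auto intro: image_eqI[where x="-H"])
    have Hs: "transpose H = H"
      by (simp add: H_def transpose_add' matrix_transpose_mul sy add.commute)
    have Hd: "H $ i $ i = S $ i $ i" for i
    proof -
      have "Y $ i $ i = 1" by (simp add: Y_def corrG_diag)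
      then show ?thesis
        by (simp add: H_def B_def matrix_matrix_mult_def transpose_def if_distrib if_distribR sum.delta cong: if_cong)
    qed
    define b where "b = S - H"
    have bs: "transpose b = b" using sS Hs by (simp add: b_def transpose_def vec_eq_iff)
    have bd: "b $ i $ i = 0" for i by (simp add: b_def Hd)
    have "b \<in> range (DcorrG x)" using DcorrG_rep[OF bs bd, of x, symmetric] by blast
    moreover have "S = H + b" by (simp add: b_def)
    ultimately show "S \<in> {a + b | a b. a \<in> lineality (tangent_cone psd_cone (corrG x)) \<and> b \<in> range (DcorrG x)}"
      using Hl unfolding Y_def by blast
  next
    fix S :: "((real, 'n) vec, 'n) vec" assume "S \<in> {a + b | a b. a \<in> lineality (tangent_cone psd_cone (corrG x)) \<and> b \<in> range (DcorrG x)}"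
    then obtain a v where S: "S = a + DcorrG x v" and a: "a \<in> tangent_cone psd_cone Y"
      unfolding lineality_def Y_def by blast
    have "transpose a = a" by (rule tangent_sym[OF sy a])
    then show "S \<in> sym_mats" unfolding sym_mats_def
      by (simp add: S transpose_add' DcorrG_sym)
  qed
qed

end
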